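(* Let $\mathcal{R}=(G_0,e\to R)$ be an expanding replacement system with limit space $X$. Then: (1) the interior of each cell of $X$ contains at least one gluing vertex and at least one regular point; (2) if $p$ lies in the interior of a cell $C(e')$, then every point of $\Omega$ mapping to $p$ has $e'$ as a prefix; (3) if $e'$ is a prefix of $f'$, then $C(e')\supseteq C(f')$; (4) if neither of $e',f'$ is a prefix of the other, then the interiors of $C(e')$ and $C(f')$ are disjoint.
   Context: A graph means a finite directed multigraph (loops, multiple edges allowed). A replacement system $\mathcal{R}=(G_0,e\to R)$: $G_0$ a graph, $e$ a non-loop directed edge from $v$ to $w$, $R$ a graph containing $v,w$ (initial and terminal vertices; other vertices interior). Replacing an edge $\varepsilon$ means deleting it and gluing in a copy of $R$ with initial/terminal vertices identified with those of $\varepsilon$; new edges are $\varepsilon\zeta$ ($\zeta\in E(R)$), new vertices $\varepsilon\nu$ ($\nu$ interior). The full expansion $G_n$ is obtained from $G_{n-1}$ by replacing every edge; edges of $G_n$ are words $\varepsilon_0\cdots\varepsilon_n$ and $V(G_0)\subset V(G_1)\subset\cdots$. $\mathcal{R}$ is expanding if neither $G_0$ nor $R$ has isolated vertices, the initial and terminal vertices of $R$ are not adjacent, and $R$ has at least three vertices and two edges. $\Omega=E(G_0)\times E(R)^{\mathbb{N}}$; $\varepsilon_0\varepsilon_1\cdots\sim\varepsilon'_0\varepsilon'_1\cdots$ iff for all $n$ the edges $\varepsilon_0\cdots\varepsilon_n$, $\varepsilon'_0\cdots\varepsilon'_n$ of $G_n$ share a vertex; $X=\Omega/\sim$ with quotient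 map $q$. Gluing vertices are elements of $\bigcup_n V(G_n)$; a sequence represents gluing vertex $u$ if $\varepsilon_0\cdots\varepsilon_n$ is incident on $u$ for all large $n$, and $u$ is identified with the point of $X$ that its representatives map to. Points of $X$ that are not gluing vertices are regular points. For an edge $e'=\varepsilon_0\cdots\varepsilon_n$ of $G_n$, the cell $C(e')$ is $q$ of the set of sequences with prefix $e'$; its boundary points are the endpoints of $e'$ (as gluing vertices), and its interior is $C(e')$ minus its boundary points. *)

theory Defs
  imports "Graph_Theory.Digraph"
begin

text \<open>Replacement system (G0, e -> R) with R having initial vertex v and terminal vertex w.
 Vertices of the expansions G_n are encoded as
   Inl x                 (x a vertex of G0), or
   Inr (b, zs, nu)       (the new vertex  b zs nu  where b is an edge of G0, zs a word of
                          edges of R and nu an interior vertex of R).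
 Edges of G_n are pairs (b, zs) with b an edge of G0 and zs a word of length n over E(R).\<close>

type_synonym ('a,'b,'c,'d) gvertex = "'a + ('b \<times> 'd list \<times> 'c)"

definition no_isolated :: "('v,'e) pre_digraph \<Rightarrow> bool" where
  "no_isolated G \<longleftrightarrow> (\<forall>x\<in>verts G. \<exists>a\<in>arcs G. tail G a = x \<or> head G a = x)"

definition expanding :: "('a,'b) pre_digraph \<Rightarrow> ('c,'d) pre_digraph \<Rightarrow> 'c \<Rightarrow> 'c \<Rightarrow> bool" where
  "expanding G0 R v w \<longleftrightarrow>
     fin_digraph G0 \<and> fin_digraph R \<and> v \<in> verts R \<and> w \<in> verts R \<and> v \<noteq> w \<and>
     no_isolated G0 \<and> no_isolated R \<and>
     (\<forall>a\<in>arcs R. \<not> (tail R a = v \<and> head R a = w) \<and> \<not> (tail R a = w \<and> head R a = v)) \<and>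
     card (verts R) \<ge> 3 \<and> card (arcs R) \<ge> 2"

text \<open>Endpoint (s = True: initial, s = False: terminal) of the edge b (rev rzs) of G_n.\<close>
fun ep_rev :: "('a,'b) pre_digraph \<Rightarrow> ('c,'d) pre_digraph \<Rightarrow> 'c \<Rightarrow> 'c \<Rightarrow> bool \<Rightarrow> 'b \<Rightarrow> 'd list
      \<Rightarrow> ('a,'b,'c,'d) gvertex" where
  "ep_rev G0 R v w s b [] = Inl (if s then tail G0 b else head G0 b)"
| "ep_rev G0 R v w s b (z # zs) =
     (let u = (if s then tail R z else head R z) in
      if u = v then ep_rev G0 R v w True b zs
      else if u = w then ep_rev G0 R v w False b zs
      else Inr (b, rev zs, u))"

definition edge_src :: "('a,'b) pre_digraph \<Rightarrow> ('c,'d) pre_digraph \<Rightarrow> 'c \<Rightarrow> 'c \<Rightarrow> 'b \<times> 'd list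
      \<Rightarrow> ('a,'b,'c,'d) gvertex" where
  "edge_src G0 R v w e' = ep_rev G0 R v w True (fst e') (rev (snd e'))"

definition edge_tgt :: "('a,'b) pre_digraph \<Rightarrow> ('c,'d) pre_digraph \<Rightarrow> 'c \<Rightarrow> 'c \<Rightarrow> 'b \<times> 'd list
      \<Rightarrow> ('a,'b,'c,'d) gvertex" where
  "edge_tgt G0 R v w e' = ep_rev G0 R v w False (fst e') (rev (snd e'))"

definition edge_ends :: "('a,'b) pre_digraph \<Rightarrow> ('c,'d) pre_digraph \<Rightarrow> 'c \<Rightarrow> 'c \<Rightarrow> 'b \<times> 'd list
      \<Rightarrow> ('a,'b,'c,'d) gvertex set" where
  "edge_ends G0 R v w e' = {edge_src G0 R v w e', edge_tgt G0 R v w e'}"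

definition edges_n :: "('a,'b) pre_digraph \<Rightarrow> ('c,'d) pre_digraph \<Rightarrow> nat \<Rightarrow> ('b \<times> 'd list) set" where
  "edges_n G0 R n = {(b, zs). b \<in> arcs G0 \<and> length zs = n \<and> set zs \<subseteq> arcs R}"

definition verts_n :: "('a,'b) pre_digraph \<Rightarrow> ('c,'d) pre_digraph \<Rightarrow> 'c \<Rightarrow> 'c \<Rightarrow> nat
      \<Rightarrow> ('a,'b,'c,'d) gvertex set" where
  "verts_n G0 R v w n = Inl ` verts G0 \<union>
     {Inr (b, zs, nu) | b zs nu. b \<in> arcs G0 \<and> set zs \<subseteq> arcs R \<and> length zs < n \<and>
                                 nu \<in> verts R - {v, w}}"

definition gluing_vertices :: "('a,'b) pre_digraph \<Rightarrow> ('c,'d) pre_digraph \<Rightarrow> 'c \<Rightarrow> 'c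
      \<Rightarrow> ('a,'b,'c,'d) gvertex set" where
  "gluing_vertices G0 R v w = (\<Union>n. verts_n G0 R v w n)"

definition Omega :: "('a,'b) pre_digraph \<Rightarrow> ('c,'d) pre_digraph \<Rightarrow> ('b \<times> (nat \<Rightarrow> 'd)) set" where
  "Omega G0 R = {(b, f). b \<in> arcs G0 \<and> (\<forall>i. f i \<in> arcs R)}"

definition pref :: "nat \<Rightarrow> 'b \<times> (nat \<Rightarrow> 'd) \<Rightarrow> 'b \<times> 'd list" where
  "pref n om = (fst om, map (snd om) [0..<n])"

definition glue :: "('a,'b) pre_digraph \<Rightarrow> ('c,'d) pre_digraph \<Rightarrow> 'c \<Rightarrow> 'c
      \<Rightarrow> 'b \<times> (nat \<Rightarrow> 'd) \<Rightarrow> 'b \<times> (nat \<Rightarrow> 'd) \<Rightarrow> bool" where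
  "glue G0 R v w om om' \<longleftrightarrow>
     (\<forall>n. edge_ends G0 R v w (pref n om) \<inter> edge_ends G0 R v w (pref n om') \<noteq> {})"

definition qmap :: "('a,'b) pre_digraph \<Rightarrow> ('c,'d) pre_digraph \<Rightarrow> 'c \<Rightarrow> 'c
      \<Rightarrow> 'b \<times> (nat \<Rightarrow> 'd) \<Rightarrow> ('b \<times> (nat \<Rightarrow> 'd)) set" where
  "qmap G0 R v w om = {om' \<in> Omega G0 R. glue G0 R v w om om'}"

definition limit_space :: "('a,'b) pre_digraph \<Rightarrow> ('c,'d) pre_digraph \<Rightarrow> 'c \<Rightarrow> 'c
      \<Rightarrow> ('b \<times> (nat \<Rightarrow> 'd)) set set" where
  "limit_space G0 R v w = qmap G0 R v w ` Omega G0 R"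

definition represents :: "('a,'b) pre_digraph \<Rightarrow> ('c,'d) pre_digraph \<Rightarrow> 'c \<Rightarrow> 'c
      \<Rightarrow> 'b \<times> (nat \<Rightarrow> 'd) \<Rightarrow> ('a,'b,'c,'d) gvertex \<Rightarrow> bool" where
  "represents G0 R v w om u \<longleftrightarrow> (\<exists>N. \<forall>n\<ge>N. u \<in> edge_ends G0 R v w (pref n om))"

definition vpts :: "('a,'b) pre_digraph \<Rightarrow> ('c,'d) pre_digraph \<Rightarrow> 'c \<Rightarrow> 'c
      \<Rightarrow> ('a,'b,'c,'d) gvertex \<Rightarrow> ('b \<times> (nat \<Rightarrow> 'd)) set set" where
  "vpts G0 R v w u = qmap G0 R v w ` {om \<in> Omega G0 R. represents G0 R v w om u}"

definition regular_point :: "('a,'b) pre_digraph \<Rightarrow> ('c,'d) pre_digraph \<Rightarrow> 'c \<Rightarrow> 'c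
      \<Rightarrow> ('b \<times> (nat \<Rightarrow> 'd)) set \<Rightarrow> bool" where
  "regular_point G0 R v w p \<longleftrightarrow>
     p \<in> limit_space G0 R v w \<and> (\<forall>u\<in>gluing_vertices G0 R v w. p \<notin> vpts G0 R v w u)"

definition seq_has_prefix :: "'b \<times> (nat \<Rightarrow> 'd) \<Rightarrow> 'b \<times> 'd list \<Rightarrow> bool" where
  "seq_has_prefix om e' \<longleftrightarrow> pref (length (snd e')) om = e'"

definition edge_prefix :: "'b \<times> 'd list \<Rightarrow> 'b \<times> 'd list \<Rightarrow> bool" where
  "edge_prefix e' f' \<longleftrightarrow> fst e' = fst f' \<and> (\<exists>ys. snd f' = snd e' @ ys)"

definition cell :: "('a,'b) pre_digraph \<Rightarrow> ('c,'d) pre_digraph \<Rightarrow> 'c \<Rightarrow> 'c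
      \<Rightarrow> 'b \<times> 'd list \<Rightarrow> ('b \<times> (nat \<Rightarrow> 'd)) set set" where
  "cell G0 R v w e' = qmap G0 R v w ` {om \<in> Omega G0 R. seq_has_prefix om e'}"

definition cell_boundary :: "('a,'b) pre_digraph \<Rightarrow> ('c,'d) pre_digraph \<Rightarrow> 'c \<Rightarrow> 'c
      \<Rightarrow> 'b \<times> 'd list \<Rightarrow> ('b \<times> (nat \<Rightarrow> 'd)) set set" where
  "cell_boundary G0 R v w e' = (\<Union>u\<in>edge_ends G0 R v w e'. vpts G0 R v w u)"

definition cell_interior :: "('a,'b) pre_digraph \<Rightarrow> ('c,'d) pre_digraph \<Rightarrow> 'c \<Rightarrow> 'c
      \<Rightarrow> 'b \<times> 'd list \<Rightarrow> ('b \<times> (nat \<Rightarrow> 'd)) set set" where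
  "cell_interior G0 R v w e' = cell G0 R v w e' - cell_boundary G0 R v w e'"

end

theory Submission
  imports Defs
begin


fun lvl :: "('a,'b,'c,'d) gvertex \<Rightarrow> nat" where
  "lvl (Inl x) = 0"
| "lvl (Inr (b, zs, nu)) = Suc (length zs)"

lemma ep_snoc: "ep_rev G0 R v w s b (rev (zs @ [z])) =
   (let u = (if s then tail R z else head R z) in
    if u = v then ep_rev G0 R v w True b (rev zs)
    else if u = w then ep_rev G0 R v w False b (rev zs)
    else Inr (b, zs, u))"
  by (simp add: Let_def)

lemma ep_Inr: "ep_rev G0 R v w s b (rev zs) = Inr (b', zs', nu) \<Longrightarrow>
   b' = b \<and> (\<exists>ys. ys \<noteq> [] \<and> zs = zs' @ ys)"
proof (induction zs arbitrary: s rule: rev_induct)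
  case Nil then show ?case by simp
next
  case (snoc z zs)
  show ?case
  proof (cases "(if s then tail R z else head R z) = v")
    case True
    then have "ep_rev G0 R v w True b (rev zs) = Inr (b', zs', nu)" using snoc.prems by (simp add: Let_def)
    from snoc.IH[OF this] show ?thesis by fastforce
  next
    case F1: False
    show ?thesis
    proof (cases "(if s then tail R z else head R z) = w")
      case True
      then have "ep_rev G0 R v w False b (rev zs) = Inr (b', zs', nu)" using snoc.prems F1 by (simp add: Let_def)
      from snoc.IH[OF this] show ?thesis by fastforce
    next
      case False
      then show ?thesis using snoc.prems F1 by (auto simp: Let_def)
    qed
  qed
qed

lemma lvl_ep: "lvl (ep_rev G0 R v w s b (rev zs)) \<le> length zs"
proof (cases "ep_rev G0 R v w s b (rev zs)")
  case (Inl x) then show ?thesis by simp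
next
  case (Inr y)
  then obtain b' zs' nu where y: "y = (b', zs', nu)" by (cases y) auto
  from ep_Inr[of G0 R v w s b zs b' zs' nu] Inr y obtain ys where "ys \<noteq> []" "zs = zs' @ ys" by auto
  then show ?thesis using Inr y by (cases ys) auto
qed

lemma ep_back: "lvl (ep_rev G0 R v w s b (rev (zs @ ys))) \<le> length zs \<Longrightarrow>
   ep_rev G0 R v w s b (rev (zs @ ys)) \<in> {ep_rev G0 R v w True b (rev zs), ep_rev G0 R v w False b (rev zs)}"
proof (induction ys arbitrary: s rule: rev_induct)
  case Nil then show ?case by (cases s) auto
next
  case (snoc z ys)
  have eq: "zs @ ys @ [z] = (zs @ ys) @ [z]" by simp
  show ?case
  proof (cases "(if s then tail R z else head R z) = v")
    case True
    then show ?thesis using snoc.prems snoc.IH[of True] unfolding eq ep_snoc by (simp add: Let_def)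
  next
    case F1: False
    show ?thesis
    proof (cases "(if s then tail R z else head R z) = w")
      case True
      then show ?thesis using snoc.prems snoc.IH[of False] F1 unfolding eq ep_snoc by (simp add: Let_def)
    next
      case False
      then show ?thesis using snoc.prems F1 unfolding eq ep_snoc by (simp add: Let_def)
    qed
  qed
qed

lemma ends_pref: "edge_ends G0 R v w (pref n om) =
  {ep_rev G0 R v w True (fst om) (rev (map (snd om) [0..<n])),
   ep_rev G0 R v w False (fst om) (rev (map (snd om) [0..<n]))}"
  by (simp add: edge_ends_def edge_src_def edge_tgt_def pref_def)

lemma map_upt_split: "n \<le> m \<Longrightarrow> map f [0..<m] = map f [0..<n] @ map f [n..<m]"
  by (metis le_add_diff_inverse map_append upt_add_eq_append zero_le)

lemma map_upt_take: "n \<le> m \<Longrightarrow> map f [0..<n] = take n (map f [0..<m])"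
  by (simp add: take_map)

lemma ends_back: "u \<in> edge_ends G0 R v w (pref m om) \<Longrightarrow> lvl u \<le> n \<Longrightarrow> n \<le> m \<Longrightarrow>
   u \<in> edge_ends G0 R v w (pref n om)"
  using ep_back[of G0 R v w _ "fst om" "map (snd om) [0..<n]" "map (snd om) [n..<m]"]
  by (auto simp: ends_pref map_upt_split[of n m "snd om"])

lemma ends_Inr: "Inr (b', zs', nu) \<in> edge_ends G0 R v w (pref m om) \<Longrightarrow>
   pref (length zs') om = (b', zs') \<and> length zs' < m"
proof -
  assume a: "Inr (b', zs', nu) \<in> edge_ends G0 R v w (pref m om)"
  then obtain s where "ep_rev G0 R v w s (fst om) (rev (map (snd om) [0..<m])) = Inr (b', zs', nu)"
    by (auto simp: ends_pref)
  from ep_Inr[OF this] obtain ys where h: "b' = fst om" "ys \<noteq> []" "map (snd om) [0..<m] = zs' @ ys" by auto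
  have l: "length zs' < m" using arg_cong[OF h(3), of length] h(2) by simp
  have "map (snd om) [0..<length zs'] = zs'"
    using map_upt_take[of "length zs'" m "snd om"] l h(3) by simp
  then show ?thesis using h l by (simp add: pref_def)
qed

lemma pref_le: "pref k om = pref k om' \<Longrightarrow> n \<le> k \<Longrightarrow> pref n om = pref n om'"
  unfolding pref_def by (metis map_upt_take prod.inject)

lemma rep_ends: "represents G0 R v w om u \<Longrightarrow> lvl u \<le> n \<Longrightarrow> u \<in> edge_ends G0 R v w (pref n om)"
  unfolding represents_def by (meson ends_back max.cobounded1 max.cobounded2)

lemma rep_pref: "represents G0 R v w om u \<Longrightarrow> represents G0 R v w om' u \<Longrightarrow> n < lvl u \<Longrightarrow>
   pref n om = pref n om'"
proof -
  assume r: "represents G0 R v w om u" "represents G0 R v w om' u" and l: "n < lvl u"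
  obtain N N' where N: "\<forall>m\<ge>N. u \<in> edge_ends G0 R v w (pref m om)"
    and N': "\<forall>m\<ge>N'. u \<in> edge_ends G0 R v w (pref m om')" using r unfolding represents_def by blast
  obtain b' zs' nu where u: "u = Inr (b', zs', nu)" using l by (cases u rule: lvl.cases) auto
  have "pref (length zs') om = (b', zs')" using ends_Inr N u by (metis le_refl max.cobounded1 max_def)
  moreover have "pref (length zs') om' = (b', zs')" using ends_Inr N' u by (metis le_refl)
  ultimately show ?thesis using pref_le l u by (metis less_Suc_eq_le lvl.simps(2))
qed



lemma glue_same: "(\<forall>n. pref n om = pref n om') \<Longrightarrow> glue G0 R v w om om'"
  by (simp add: glue_def edge_ends_def)

lemma glue_refl: "glue G0 R v w om om"
  by (simp add: glue_same)

lemma rep_glue: "represents G0 R v w om u \<Longrightarrow> represents G0 R v w om' u \<Longrightarrow> glue G0 R v w om om'"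
  unfolding glue_def
proof
  fix n assume r: "represents G0 R v w om u" "represents G0 R v w om' u"
  show "edge_ends G0 R v w (pref n om) \<inter> edge_ends G0 R v w (pref n om') \<noteq> {}"
  proof (cases "lvl u \<le> n")
    case True
    then show ?thesis using rep_ends[OF r(1) True] rep_ends[OF r(2) True] by blast
  next
    case False
    then have "pref n om = pref n om'" using rep_pref[OF r] by simp
    then show ?thesis by (simp add: edge_ends_def)
  qed
qed

lemma glue_cases:
  assumes g: "glue G0 R v w om om'"
  shows "(\<forall>n. pref n om = pref n om') \<or> (\<exists>u. represents G0 R v w om u \<and> represents G0 R v w om' u)"
proof (cases "\<forall>n. pref n om = pref n om'")
  case True then show ?thesis by blast
next
  case False
  then obtain N where N: "pref N om \<noteq> pref N om'" by blast
  define S where "S n = edge_ends G0 R v w (pref n om) \<inter> edge_ends G0 R v w (pref n om')" for n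
  have ne: "S n \<noteq> {}" for n using g unfolding glue_def S_def by blast
  have lv: "lvl u \<le> N" if "u \<in> S n" "N \<le> n" for u n
  proof (rule ccontr)
    assume "\<not> lvl u \<le> N"
    then obtain b' zs' nu where u: "u = Inr (b', zs', nu)" by (cases u rule: lvl.cases) auto
    have i1: "Inr (b', zs', nu) \<in> edge_ends G0 R v w (pref n om)"
      and i2: "Inr (b', zs', nu) \<in> edge_ends G0 R v w (pref n om')"
      using that(1) u unfolding S_def by auto
    have h1: "pref (length zs') om = (b', zs')" using ends_Inr[OF i1] by blast
    have h2: "pref (length zs') om' = (b', zs')" using ends_Inr[OF i2] by blast
    have "N \<le> length zs'" using \<open>\<not> lvl u \<le> N\<close> u by simp
    then have "pref N om = pref N om'" using pref_le[of "length zs'" om om' N] h1 h2 by simp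
    then show False using N by simp
  qed
  have mono: "S n \<subseteq> S n'" if "N \<le> n'" "n' \<le> n" for n n'
  proof
    fix u assume "u \<in> S n"
    have "N \<le> n" using that by linarith
    then have "lvl u \<le> N" using lv[OF \<open>u \<in> S n\<close>] by blast
    then have l: "lvl u \<le> n'" using that by linarith
    have a1: "u \<in> edge_ends G0 R v w (pref n om)" and a2: "u \<in> edge_ends G0 R v w (pref n om')"
      using \<open>u \<in> S n\<close> unfolding S_def by auto
    show "u \<in> S n'" using ends_back[OF a1 l that(2)] ends_back[OF a2 l that(2)] unfolding S_def by blast
  qed
  have "\<exists>u. \<forall>n\<ge>N. u \<in> S n"
  proof (rule ccontr)
    assume c: "\<not> (\<exists>u. \<forall>n\<ge>N. u \<in> S n)"
    obtain s1 s2 where s12: "edge_ends G0 R v w (pref N om) = {s1, s2}" unfolding edge_ends_def by blast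
    obtain n1 where n1: "n1 \<ge> N" "s1 \<notin> S n1" using c by blast
    obtain n2 where n2: "n2 \<ge> N" "s2 \<notin> S n2" using c by blast
    define n where "n = max n1 n2"
    obtain u where u: "u \<in> S n" using ne by blast
    have nn: "N \<le> n" "n1 \<le> n" "n2 \<le> n" using n1 n2 unfolding n_def by auto
    have "u \<in> S N" using mono[OF order_refl nn(1)] u by blast
    then have "u = s1 \<or> u = s2" using s12 unfolding S_def by blast
    then show False using mono[OF n1(1) nn(2)] mono[OF n2(1) nn(3)] u n1(2) n2(2) by blast
  qed
  then obtain u where "\<forall>n\<ge>N. u \<in> S n" by blast
  then have "\<exists>u. represents G0 R v w om u \<and> represents G0 R v w om' u"
    unfolding represents_def S_def by blast
  then show ?thesis by blast
qed

lemma old_end: "lvl (ep_rev G0 R v w s b (z # rev ys)) \<le> length ys \<Longrightarrow>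
   (if s then tail R z else head R z) = v \<or> (if s then tail R z else head R z) = w"
  by (cases s) (auto simp: Let_def split: if_splits)

lemma same_end: "tail R z = head R z \<Longrightarrow>
   ep_rev G0 R v w True b (z # zs) = ep_rev G0 R v w False b (z # zs)"
  by (simp add: Let_def)

lemma exp_nvw: "expanding G0 R v w \<Longrightarrow> z \<in> arcs R \<Longrightarrow>
   \<not> (tail R z = v \<and> head R z = w) \<and> \<not> (tail R z = w \<and> head R z = v)"
  unfolding expanding_def by (elim conjE) (drule bspec, assumption)

lemma rep_unique:
  assumes om: "om \<in> Omega G0 R" and ex: "expanding G0 R v w"
    and r: "represents G0 R v w om u" "represents G0 R v w om u'"
  shows "u = u'"
proof (rule ccontr)
  assume ne: "u \<noteq> u'"
  obtain N N' where N: "\<forall>m\<ge>N. u \<in> edge_ends G0 R v w (pref m om)"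
    and N': "\<forall>m\<ge>N'. u' \<in> edge_ends G0 R v w (pref m om)" using r unfolding represents_def by blast
  define n where "n = max (max N N') (max (lvl u) (lvl u'))"
  define b where "b = fst om"
  define ys where "ys = map (snd om) [0..<n]"
  define z where "z = snd om n"
  have zR: "z \<in> arcs R" using om unfolding Omega_def z_def by auto
  have mp: "map (snd om) [0..<Suc n] = ys @ [z]" unfolding ys_def z_def by simp
  have rv: "rev (ys @ [z]) = z # rev ys" by simp
  define T where "T = ep_rev G0 R v w True b (z # rev ys)"
  define F where "F = ep_rev G0 R v w False b (z # rev ys)"
  have E: "edge_ends G0 R v w (pref (Suc n) om) = {T, F}"
    unfolding ends_pref mp rv T_def F_def b_def ..
  have "Suc n \<ge> N" "Suc n \<ge> N'" unfolding n_def by auto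
  then have uu: "u \<in> {T, F}" "u' \<in> {T, F}" using N N' E by blast+
  have uo: "u = T \<or> u = F" "u' = T \<or> u' = F" using uu by blast+
  have lu: "lvl u \<le> n" "lvl u' \<le> n" unfolding n_def by auto
  have lT0: "lvl T \<le> n"
  proof (cases "u = T")
    case True then show ?thesis using lu(1) by simp
  next
    case False then have "u' = T" using uo ne by simp
    then show ?thesis using lu(2) by simp
  qed
  have lF0: "lvl F \<le> n"
  proof (cases "u = F")
    case True then show ?thesis using lu(1) by simp
  next
    case False then have "u' = F" using uo ne by simp
    then show ?thesis using lu(2) by simp
  qed
  have lTF: "lvl T \<le> n \<and> lvl F \<le> n" using lT0 lF0 by blast
  have len: "length ys = n" unfolding ys_def by simp
  have lT: "lvl T \<le> length ys" using lTF len by simp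
  have lF: "lvl F \<le> length ys" using lTF len by simp
  have t: "tail R z = v \<or> tail R z = w" using old_end[OF lT[unfolded T_def]] by (simp only: if_True)
  have h: "head R z = v \<or> head R z = w" using old_end[OF lF[unfolded F_def]] by (simp only: if_False)
  have "tail R z = head R z" using t h exp_nvw[OF ex zR] by metis
  then have "T = F" unfolding T_def F_def by (rule same_end)
  then show False using uo ne by metis
qed


lemma qmap_glue: "om' \<in> Omega G0 R \<Longrightarrow> qmap G0 R v w om = qmap G0 R v w om' \<Longrightarrow> glue G0 R v w om om'"
proof -
  assume a: "om' \<in> Omega G0 R" "qmap G0 R v w om = qmap G0 R v w om'"
  have "om' \<in> qmap G0 R v w om'" unfolding qmap_def using a(1) glue_refl by simp
  then have "om' \<in> qmap G0 R v w om" using a(2) by simp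
  then show ?thesis unfolding qmap_def by simp
qed
lemma rep_of_vpts:
  assumes om: "om \<in> Omega G0 R" and ex: "expanding G0 R v w"
    and p: "qmap G0 R v w om \<in> vpts G0 R v w u"
  shows "represents G0 R v w om u"
proof -
  obtain om' where om': "om' \<in> Omega G0 R" "represents G0 R v w om' u"
    "qmap G0 R v w om = qmap G0 R v w om'" using p unfolding vpts_def image_iff by blast
  have g: "glue G0 R v w om om'" using qmap_glue[OF om'(1) om'(3)] .
  from glue_cases[OF g] show ?thesis
  proof
    assume "\<forall>n. pref n om = pref n om'"
    then show ?thesis using om'(2) unfolding represents_def by simp
  next
    assume "\<exists>u. represents G0 R v w om u \<and> represents G0 R v w om' u"
    then obtain u'' where r1: "represents G0 R v w om u''" and r2: "represents G0 R v w om' u''" by blast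
    have "u = u''" using rep_unique[OF om'(1) ex om'(2) r2] .
    then show ?thesis using r1 by simp
  qed
qed
lemma has_prefix_eq: "seq_has_prefix om e' \<longleftrightarrow> (\<exists>n. e' = (fst om, map (snd om) [0..<n]))"
proof
  assume h: "seq_has_prefix om e'"
  show "\<exists>n. e' = (fst om, map (snd om) [0..<n])"
    by (rule exI[of _ "length (snd e')"], rule sym[OF h[unfolded seq_has_prefix_def pref_def]])
next
  assume "\<exists>n. e' = (fst om, map (snd om) [0..<n])"
  then obtain n where e: "e' = (fst om, map (snd om) [0..<n])" by blast
  show "seq_has_prefix om e'" unfolding e by (simp add: seq_has_prefix_def pref_def)
qed


lemma part2:
  assumes ex: "expanding G0 R v w" and p: "p \<in> cell_interior G0 R v w e'"
    and om: "om \<in> Omega G0 R" and q: "qmap G0 R v w om = p"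
  shows "seq_has_prefix om e'"
proof -
  define n where "n = length (snd e')"
  have "p \<in> cell G0 R v w e'" using p unfolding cell_interior_def by blast
  then obtain om0 where om0': "om0 \<in> Omega G0 R" "seq_has_prefix om0 e'" "p = qmap G0 R v w om0"
    unfolding cell_def by blast
  have om0: "om0 \<in> Omega G0 R" "pref n om0 = e'" "p = qmap G0 R v w om0"
    using om0' unfolding seq_has_prefix_def n_def[symmetric] by blast+
  have nb: "\<And>u. u \<in> edge_ends G0 R v w e' \<Longrightarrow> p \<notin> vpts G0 R v w u"
    using p unfolding cell_interior_def cell_boundary_def by blast
  have "qmap G0 R v w om0 = qmap G0 R v w om" using om0(3) q by simp
  then have g: "glue G0 R v w om0 om" using qmap_glue[OF om] by blast
  have fin: "seq_has_prefix om e'" if "pref n om0 = pref n om"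
  proof -
    have "pref n om = e'" using that om0(2) by (rule subst)
    then show ?thesis unfolding seq_has_prefix_def n_def[symmetric] .
  qed
  from glue_cases[OF g] show ?thesis
  proof
    assume "\<forall>n. pref n om0 = pref n om"
    then show ?thesis using fin by blast
  next
    assume "\<exists>u. represents G0 R v w om0 u \<and> represents G0 R v w om u"
    then obtain u where r: "represents G0 R v w om0 u" "represents G0 R v w om u" by blast
    show ?thesis
    proof (cases "lvl u \<le> n")
      case True
      have "u \<in> edge_ends G0 R v w (pref n om0)" using rep_ends[OF r(1) True] .
      then have "u \<in> edge_ends G0 R v w e'" using om0(2) by simp
      moreover have "p \<in> vpts G0 R v w u" using om0 r unfolding vpts_def by blast
      ultimately show ?thesis using nb by blast
    next
      case False
      then have "pref n om0 = pref n om" using rep_pref[OF r] by simp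
      then show ?thesis using fin by blast
    qed
  qed
qed
lemma two_prefix: "seq_has_prefix om e' \<Longrightarrow> seq_has_prefix om f' \<Longrightarrow>
   edge_prefix e' f' \<or> edge_prefix f' e'"
proof -
  assume a: "seq_has_prefix om e'" "seq_has_prefix om f'"
  obtain n where e: "e' = (fst om, map (snd om) [0..<n])" using a(1) unfolding has_prefix_eq by blast
  obtain m where f: "f' = (fst om, map (snd om) [0..<m])" using a(2) unfolding has_prefix_eq by blast
  show ?thesis
  proof (cases "n \<le> m")
    case True
    then show ?thesis unfolding e f edge_prefix_def using map_upt_split[OF True, of "snd om"] by auto
  next
    case False
    then have le: "m \<le> n" by simp
    then show ?thesis unfolding e f edge_prefix_def using map_upt_split[OF le, of "snd om"] by auto
  qed
qed
lemma prefix_trans: "edge_prefix e' f' \<Longrightarrow> seq_has_prefix om f' \<Longrightarrow> seq_has_prefix om e'"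
proof -
  assume a: "edge_prefix e' f'" "seq_has_prefix om f'"
  obtain m where f: "f' = (fst om, map (snd om) [0..<m])" using a(2) unfolding has_prefix_eq by blast
  obtain b zs where e: "e' = (b, zs)" by (cases e')
  obtain ys where ys: "b = fst om" "map (snd om) [0..<m] = zs @ ys"
    using a(1) unfolding edge_prefix_def e f by auto
  define L where "L = length zs"
  have Lm: "L \<le> m" using arg_cong[OF ys(2), of length] unfolding L_def by simp
  have "zs = take L (zs @ ys)" unfolding L_def by simp
  also have "\<dots> = take L (map (snd om) [0..<m])" using ys(2) by simp
  also have "\<dots> = map (snd om) [0..<L]" by (rule sym[OF map_upt_take[OF Lm]])
  finally have "e' = (fst om, map (snd om) [0..<L])" unfolding e ys(1) by simp
  then show ?thesis unfolding has_prefix_eq by blast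
qed



lemma exp_parts: "expanding G0 R v w \<Longrightarrow> v \<in> verts R \<and> w \<in> verts R \<and> v \<noteq> w \<and>
   no_isolated R \<and> card (verts R) \<ge> 3"
  unfolding expanding_def by (elim conjE) (intro conjI; assumption)

lemma incident_arc: "no_isolated R \<Longrightarrow> x \<in> verts R \<Longrightarrow> \<exists>a\<in>arcs R. tail R a = x \<or> head R a = x"
  unfolding no_isolated_def by blast

lemma av_facts: "expanding G0 R v w \<Longrightarrow> a \<in> arcs R \<Longrightarrow> tail R a = v \<or> head R a = v \<Longrightarrow>
   tail R a \<noteq> w \<and> head R a \<noteq> w"
  using exp_nvw[of G0 R v w a] exp_parts[of G0 R v w] by auto

lemma aw_facts: "expanding G0 R v w \<Longrightarrow> a \<in> arcs R \<Longrightarrow> tail R a = w \<or> head R a = w \<Longrightarrow>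
   tail R a \<noteq> v \<and> head R a \<noteq> v"
  using exp_nvw[of G0 R v w a] exp_parts[of G0 R v w] by auto

fun stt :: "('c,'d) pre_digraph \<Rightarrow> 'c \<Rightarrow> 'c \<Rightarrow> 'd \<Rightarrow> 'd \<Rightarrow> bool \<Rightarrow> nat \<Rightarrow> bool" where
  "stt R v w av aw s0 0 = s0"
| "stt R v w av aw s0 (Suc k) =
     (tail R (if stt R v w av aw s0 k then av else aw) = (if stt R v w av aw s0 k then v else w))"

lemma keep_step:
  assumes "v \<noteq> w" "tail R av = v \<or> head R av = v" "tail R aw = w \<or> head R aw = w"
  shows "ep_rev G0 R v w (tail R (if s then av else aw) = (if s then v else w)) b
           ((if s then av else aw) # zs) = ep_rev G0 R v w s b zs"
  using assms by (cases s) (auto simp: Let_def)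

lemma rep_exists:
  assumes ex: "expanding G0 R v w" and b: "b \<in> arcs G0" and ys0: "set ys0 \<subseteq> arcs R"
    and u: "ep_rev G0 R v w s0 b (rev ys0) = u"
  shows "\<exists>f. (b, f) \<in> Omega G0 R \<and> represents G0 R v w (b, f) u \<and> pref (length ys0) (b, f) = (b, ys0)"
proof -
  have P: "v \<in> verts R" "w \<in> verts R" "v \<noteq> w" "no_isolated R" using exp_parts[OF ex] by auto
  obtain av where av: "av \<in> arcs R" "tail R av = v \<or> head R av = v" using incident_arc[OF P(4) P(1)] by blast
  obtain aw where aw: "aw \<in> arcs R" "tail R aw = w \<or> head R aw = w" using incident_arc[OF P(4) P(2)] by blast
  define L where "L = length ys0"
  define f where "f i = (if i < L then ys0 ! i else (if stt R v w av aw s0 (i - L) then av else aw))" for i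
  have m0: "map f [0..<L] = ys0"
  proof -
    have "map f [0..<L] = map (\<lambda>i. ys0 ! i) [0..<L]" by (rule map_cong) (auto simp: f_def)
    then show ?thesis by (simp add: L_def map_nth)
  qed
  have key: "ep_rev G0 R v w (stt R v w av aw s0 k) b (rev (map f [0..<L + k])) = u" for k
  proof (induction k)
    case 0 then show ?case using m0 u by simp
  next
    case (Suc k)
    have fk: "f (L + k) = (if stt R v w av aw s0 k then av else aw)" by (simp add: f_def)
    have rr: "rev (map f [0..<L + Suc k]) = f (L + k) # rev (map f [0..<L + k])" by simp
    have "ep_rev G0 R v w (stt R v w av aw s0 (Suc k)) b (rev (map f [0..<L + Suc k]))
        = ep_rev G0 R v w (stt R v w av aw s0 k) b (rev (map f [0..<L + k]))"
      unfolding rr fk stt.simps(2) by (rule keep_step[OF P(3) av(2) aw(2)])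
    then show ?case using Suc.IH by simp
  qed
  have om: "(b, f) \<in> Omega G0 R"
    unfolding Omega_def using b ys0 av(1) aw(1) by (auto simp: f_def L_def)
  have rep: "represents G0 R v w (b, f) u"
    unfolding represents_def
  proof (intro exI allI impI)
    fix n assume "L \<le> n"
    then have n: "n = L + (n - L)" by simp
    have "ep_rev G0 R v w (stt R v w av aw s0 (n - L)) b (rev (map f [0..<n])) = u"
      using key[of "n - L"] n by simp
    then show "u \<in> edge_ends G0 R v w (pref n (b, f))" unfolding ends_pref
      by (cases "stt R v w av aw s0 (n - L)") auto
  qed
  have "pref (length ys0) (b, f) = (b, ys0)" using m0 unfolding pref_def L_def by simp
  then show ?thesis using om rep by blast
qed

lemma kp1: "tail R a \<noteq> v \<Longrightarrow> tail R a \<noteq> w \<Longrightarrow> tail R c \<noteq> w \<Longrightarrow> head R c \<noteq> w \<Longrightarrow>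
   length ys < lvl (ep_rev G0 R v w s b (c # a # rev ys))"
  by (cases s) (auto simp: Let_def)

lemma kp2: "head R a \<noteq> v \<Longrightarrow> head R a \<noteq> w \<Longrightarrow> tail R c \<noteq> v \<Longrightarrow> head R c \<noteq> v \<Longrightarrow>
   length ys < lvl (ep_rev G0 R v w s b (c # a # rev ys))"
  by (cases s) (auto simp: Let_def)

lemma interior_vertex: "expanding G0 R v w \<Longrightarrow> \<exists>x\<in>verts R. x \<noteq> v \<and> x \<noteq> w"
proof (rule ccontr)
  assume ex: "expanding G0 R v w" and "\<not> (\<exists>x\<in>verts R. x \<noteq> v \<and> x \<noteq> w)"
  then have "verts R \<subseteq> {v, w}" by blast
  then have "card (verts R) \<le> card {v, w}" by (rule card_mono[rotated]) simp
  also have "\<dots> \<le> 2" by (simp add: card_insert_if)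
  finally show False using exp_parts[OF ex] by simp
qed

lemma nonrep_exists:
  assumes ex: "expanding G0 R v w" and b: "b \<in> arcs G0" and ys0: "set ys0 \<subseteq> arcs R"
  shows "\<exists>f. (b, f) \<in> Omega G0 R \<and> (\<forall>u. \<not> represents G0 R v w (b, f) u) \<and> pref (length ys0) (b, f) = (b, ys0)"
proof -
  have P: "v \<in> verts R" "w \<in> verts R" "v \<noteq> w" "no_isolated R" using exp_parts[OF ex] by auto
  obtain x where x: "x \<in> verts R" "x \<noteq> v" "x \<noteq> w" using interior_vertex[OF ex] by blast
  obtain a where a: "a \<in> arcs R" "tail R a = x \<or> head R a = x" using incident_arc[OF P(4) x(1)] by blast
  obtain av where av: "av \<in> arcs R" "tail R av = v \<or> head R av = v" using incident_arc[OF P(4) P(1)] by blast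
  obtain aw where aw: "aw \<in> arcs R" "tail R aw = w \<or> head R aw = w" using incident_arc[OF P(4) P(2)] by blast
  obtain c where c: "c \<in> arcs R" "\<And>s ys. length ys < lvl (ep_rev G0 R v w s b (c # a # rev ys))"
  proof (cases "tail R a = x")
    case True
    have af: "tail R av \<noteq> w \<and> head R av \<noteq> w" using av_facts[OF ex av] .
    have "length ys < lvl (ep_rev G0 R v w s b (av # a # rev ys))" for s ys
      by (rule kp1) (use True x af in simp_all)
    then show ?thesis by (rule that[OF av(1)])
  next
    case False
    then have "head R a = x" using a(2) by blast
    have af: "tail R aw \<noteq> v \<and> head R aw \<noteq> v" using aw_facts[OF ex aw] .
    have "length ys < lvl (ep_rev G0 R v w s b (aw # a # rev ys))" for s ys
      by (rule kp2) (use \<open>head R a = x\<close> x af in simp_all)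
    then show ?thesis by (rule that[OF aw(1)])
  qed
  define L where "L = length ys0"
  define f where "f i = (if i < L then ys0 ! i else if even (i - L) then a else c)" for i
  have m0: "map f [0..<L] = ys0"
  proof -
    have "map f [0..<L] = map (\<lambda>i. ys0 ! i) [0..<L]" by (rule map_cong) (auto simp: f_def)
    then show ?thesis by (simp add: L_def map_nth)
  qed
  have "f i \<in> arcs R" for i
  proof (cases "i < L")
    case True
    then have "ys0 ! i \<in> set ys0" unfolding L_def by simp
    then show ?thesis using True ys0 by (auto simp: f_def)
  next
    case False then show ?thesis using a(1) c(1) by (simp add: f_def)
  qed
  then have om: "(b, f) \<in> Omega G0 R"
    unfolding Omega_def using b by simp
  have nrep: "\<not> represents G0 R v w (b, f) u" for u
  proof
    assume "represents G0 R v w (b, f) u"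
    then obtain N where N: "\<forall>n\<ge>N. u \<in> edge_ends G0 R v w (pref n (b, f))" unfolding represents_def by blast
    define k where "k = N + lvl u"
    define ys where "ys = map f [0..<L + 2 * k]"
    have fa: "f (L + 2 * k) = a" by (simp add: f_def)
    have fc: "f (Suc (L + 2 * k)) = c" by (simp add: f_def)
    have "map f [0..<L + 2 * k + 2] = ys @ [a, c]" unfolding ys_def using fa fc by simp
    then have r: "rev (map f [0..<L + 2 * k + 2]) = c # a # rev ys" by simp
    have "u \<in> edge_ends G0 R v w (pref (L + 2 * k + 2) (b, f))" using N unfolding k_def by simp
    moreover have "edge_ends G0 R v w (pref (L + 2 * k + 2) (b, f)) =
       {ep_rev G0 R v w True b (c # a # rev ys), ep_rev G0 R v w False b (c # a # rev ys)}"
      unfolding ends_pref by (simp only: fst_conv snd_conv r)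
    ultimately obtain s where "u = ep_rev G0 R v w s b (c # a # rev ys)" by blast
    then have "length ys < lvl u" using c(2) by simp
    moreover have "length ys = L + 2 * k" unfolding ys_def by simp
    ultimately show False unfolding k_def by simp
  qed
  have "pref (length ys0) (b, f) = (b, ys0)" using m0 unfolding pref_def L_def by simp
  then show ?thesis using om nrep by blast
qed



lemma int_of:
  assumes ex: "expanding G0 R v w" and om: "om \<in> Omega G0 R" and pr: "seq_has_prefix om e'"
    and nr: "\<And>u'. u' \<in> edge_ends G0 R v w e' \<Longrightarrow> \<not> represents G0 R v w om u'"
  shows "qmap G0 R v w om \<in> cell_interior G0 R v w e'"
proof -
  have "qmap G0 R v w om \<in> cell G0 R v w e'" unfolding cell_def using om pr by blast
  moreover have "qmap G0 R v w om \<notin> cell_boundary G0 R v w e'"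
  proof
    assume "qmap G0 R v w om \<in> cell_boundary G0 R v w e'"
    then obtain u' where "u' \<in> edge_ends G0 R v w e'" "qmap G0 R v w om \<in> vpts G0 R v w u'"
      unfolding cell_boundary_def by blast
    then show False using nr rep_of_vpts[OF om ex] by blast
  qed
  ultimately show ?thesis unfolding cell_interior_def by blast
qed

lemma ends_lvl: "u \<in> edge_ends G0 R v w (b, zs) \<Longrightarrow> lvl u \<le> length zs"
  unfolding edge_ends_def edge_src_def edge_tgt_def using lvl_ep by fastforce

lemma part1:
  fixes G0 :: "('a,'b) pre_digraph" and R :: "('c,'d) pre_digraph" and v w :: 'c
  assumes ex: "expanding G0 R v w" and e': "e' \<in> edges_n G0 R n"
  shows "(\<exists>u\<in>gluing_vertices G0 R v w. vpts G0 R v w u \<inter> cell_interior G0 R v w e' \<noteq> {}) \<and>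
         (\<exists>p\<in>cell_interior G0 R v w e'. regular_point G0 R v w p)"
proof
  obtain b zs where e'eq: "e' = (b, zs)" by (cases e')
  have b: "b \<in> arcs G0" and zs: "length zs = n" "set zs \<subseteq> arcs R"
    using e' unfolding edges_n_def e'eq by auto
  have P: "v \<in> verts R" "w \<in> verts R" "v \<noteq> w" "no_isolated R" using exp_parts[OF ex] by auto
  show "\<exists>u\<in>gluing_vertices G0 R v w. vpts G0 R v w u \<inter> cell_interior G0 R v w e' \<noteq> {}"
  proof -
    obtain x where x: "x \<in> verts R" "x \<noteq> v" "x \<noteq> w" using interior_vertex[OF ex] by blast
    obtain a where a: "a \<in> arcs R" "tail R a = x \<or> head R a = x" using incident_arc[OF P(4) x(1)] by blast
    define s0 where "s0 = (tail R a = x)"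
    have sel: "(if s0 then tail R a else head R a) = x" using a(2) unfolding s0_def by auto
    define u :: "('a,'b,'c,'d) gvertex" where "u = Inr (b, zs, x)"
    have ue: "ep_rev G0 R v w s0 b (rev (zs @ [a])) = u"
      unfolding ep_snoc Let_def sel u_def using x by simp
    have ys0: "set (zs @ [a]) \<subseteq> arcs R" using zs a by simp
    obtain f where f: "(b, f) \<in> Omega G0 R" "represents G0 R v w (b, f) u"
      "pref (length (zs @ [a])) (b, f) = (b, zs @ [a])" using rep_exists[OF ex b ys0 ue] by blast
    have mz: "map f [0..<Suc n] = zs @ [a]" using f(3) zs unfolding pref_def by simp
    have "map f [0..<n] = take n (map f [0..<Suc n])" by (rule map_upt_take) simp
    also have "\<dots> = zs" unfolding mz using zs by simp
    finally have pr: "seq_has_prefix (b, f) e'" unfolding seq_has_prefix_def pref_def e'eq using zs(1) by simp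
    have nr: "\<not> represents G0 R v w (b, f) u'" if "u' \<in> edge_ends G0 R v w e'" for u'
    proof
      assume "represents G0 R v w (b, f) u'"
      then have "u = u'" using rep_unique[OF f(1) ex f(2)] by blast
      moreover have "lvl u' \<le> n" using ends_lvl that zs unfolding e'eq by fastforce
      ultimately have "lvl u \<le> n" by simp
      then show False unfolding u_def using zs by simp
    qed
    have int: "qmap G0 R v w (b, f) \<in> cell_interior G0 R v w e'" using int_of[OF ex f(1) pr] nr by blast
    have vp: "qmap G0 R v w (b, f) \<in> vpts G0 R v w u" unfolding vpts_def using f(1,2) by blast
    have "u \<in> verts_n G0 R v w (Suc n)" unfolding verts_n_def u_def using b zs x by blast
    then have "u \<in> gluing_vertices G0 R v w" unfolding gluing_vertices_def by blast
    then show ?thesis using int vp by blast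
  qed
  show "\<exists>p\<in>cell_interior G0 R v w e'. regular_point G0 R v w p"
  proof -
    obtain f where f: "(b, f) \<in> Omega G0 R" "\<forall>u. \<not> represents G0 R v w (b, f) u"
      "pref (length zs) (b, f) = (b, zs)" using nonrep_exists[OF ex b zs(2)] by blast
    have pr: "seq_has_prefix (b, f) e'" unfolding seq_has_prefix_def e'eq using f(3) by simp
    have int: "qmap G0 R v w (b, f) \<in> cell_interior G0 R v w e'" using int_of[OF ex f(1) pr] f(2) by blast
    have "regular_point G0 R v w (qmap G0 R v w (b, f))"
      unfolding regular_point_def limit_space_def using f(1,2) rep_of_vpts[OF f(1) ex] by blast
    then show ?thesis using int by blast
  qed
qed

theorem proposition1p23:
  fixes G0 :: "('a,'b) pre_digraph" and R :: "('c,'d) pre_digraph" and v w :: 'c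
  assumes "expanding G0 R v w"
  shows "(\<forall>n. \<forall>e'\<in>edges_n G0 R n.
            (\<exists>u\<in>gluing_vertices G0 R v w. vpts G0 R v w u \<inter> cell_interior G0 R v w e' \<noteq> {}) \<and>
            (\<exists>p\<in>cell_interior G0 R v w e'. regular_point G0 R v w p))
       \<and> (\<forall>n. \<forall>e'\<in>edges_n G0 R n. \<forall>p\<in>cell_interior G0 R v w e'.
            \<forall>om\<in>Omega G0 R. qmap G0 R v w om = p \<longrightarrow> seq_has_prefix om e')
       \<and> (\<forall>n m. \<forall>e'\<in>edges_n G0 R n. \<forall>f'\<in>edges_n G0 R m.
            edge_prefix e' f' \<longrightarrow> cell G0 R v w f' \<subseteq> cell G0 R v w e')
       \<and> (\<forall>n m. \<forall>e'\<in>edges_n G0 R n. \<forall>f'\<in>edges_n G0 R m.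
            \<not> edge_prefix e' f' \<and> \<not> edge_prefix f' e' \<longrightarrow>
            cell_interior G0 R v w e' \<inter> cell_interior G0 R v w f' = {})"
proof (intro conjI)
  show "\<forall>n. \<forall>e'\<in>edges_n G0 R n.
            (\<exists>u\<in>gluing_vertices G0 R v w. vpts G0 R v w u \<inter> cell_interior G0 R v w e' \<noteq> {}) \<and>
            (\<exists>p\<in>cell_interior G0 R v w e'. regular_point G0 R v w p)"
    using part1[OF assms] by blast
  show "\<forall>n. \<forall>e'\<in>edges_n G0 R n. \<forall>p\<in>cell_interior G0 R v w e'.
            \<forall>om\<in>Omega G0 R. qmap G0 R v w om = p \<longrightarrow> seq_has_prefix om e'"
    using part2[OF assms] by blast
  show "\<forall>n m. \<forall>e'\<in>edges_n G0 R n. \<forall>f'\<in>edges_n G0 R m.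
            edge_prefix e' f' \<longrightarrow> cell G0 R v w f' \<subseteq> cell G0 R v w e'"
  proof (intro allI ballI impI subsetI)
    fix n m :: nat and e' f' :: "'b \<times> 'd list" and p assume "edge_prefix e' f'" "p \<in> cell G0 R v w f'"
    then show "p \<in> cell G0 R v w e'" unfolding cell_def using prefix_trans by blast
  qed
  show "\<forall>n m. \<forall>e'\<in>edges_n G0 R n. \<forall>f'\<in>edges_n G0 R m.
            \<not> edge_prefix e' f' \<and> \<not> edge_prefix f' e' \<longrightarrow>
            cell_interior G0 R v w e' \<inter> cell_interior G0 R v w f' = {}"
  proof (intro allI ballI impI)
    fix n m :: nat and e' f' :: "'b \<times> 'd list" assume np: "\<not> edge_prefix e' f' \<and> \<not> edge_prefix f' e'"
    show "cell_interior G0 R v w e' \<inter> cell_interior G0 R v w f' = {}"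
    proof (rule ccontr)
      assume "cell_interior G0 R v w e' \<inter> cell_interior G0 R v w f' \<noteq> {}"
      then obtain p where p1: "p \<in> cell_interior G0 R v w e'" and p2: "p \<in> cell_interior G0 R v w f'" by blast
      have "p \<in> cell G0 R v w f'" using p2 unfolding cell_interior_def by blast
      then obtain om where om: "om \<in> Omega G0 R" "seq_has_prefix om f'" "qmap G0 R v w om = p"
        unfolding cell_def by blast
      have "seq_has_prefix om e'" using part2[OF assms p1 om(1) om(3)] .
      then show False using two_prefix om(2) np by blast
    qed
  qed
qed

end
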